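(* Let $R$ be a ring with identity and involution $*$, and let $a,b\in R$ with $aR=a^2R$. Then the following are equivalent: (1) $a$ is core invertible with core inverse $a^{\oplus}=b$; (2) $bab=b$, $(ab)^*=ab$ and $ba^2=a$.
   Context: An involution on $R$ satisfies $(a^* )^*=a$, $(ab)^*=b^*a^*$, $(a+b)^*=a^*+b^*$. An element $x\in R$ is a core inverse of $a$ if $axa=a$, $xR=aR$ and $Rx=Ra^*$; it is unique when it exists and is denoted $a^{\oplus}$. $aR=\{ar: r\in R\}$. *)

theory Defs
  imports Main
begin

definition involution :: "('a::ring_1 \<Rightarrow> 'a) \<Rightarrow> bool" where
  "involution s \<longleftrightarrow> (\<forall>a. s (s a) = a) \<and> (\<forall>a b. s (a * b) = s b * s a)
      \<and> (\<forall>a b. s (a + b) = s a + s b)"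

definition right_ideal :: "'a::ring_1 \<Rightarrow> 'a set" where
  "right_ideal a = {a * r | r. True}"

definition left_ideal :: "'a::ring_1 \<Rightarrow> 'a set" where
  "left_ideal a = {r * a | r. True}"

definition is_core_inverse :: "('a::ring_1 \<Rightarrow> 'a) \<Rightarrow> 'a \<Rightarrow> 'a \<Rightarrow> bool" where
  "is_core_inverse s a x \<longleftrightarrow> a * x * a = a \<and> right_ideal x = right_ideal a
      \<and> left_ideal x = left_ideal (s a)"

end

theory Submission
  imports Defs
begin

lemma ri_eq: "right_ideal (x::'a::ring_1) = right_ideal y \<longleftrightarrow> (\<exists>r. x = y * r) \<and> (\<exists>t. y = x * t)"
proof
  assume h: "right_ideal x = right_ideal y"
  have "x \<in> right_ideal x" unfolding right_ideal_def by (auto intro: exI[of _ 1])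
  moreover have "y \<in> right_ideal y" unfolding right_ideal_def by (auto intro: exI[of _ 1])
  ultimately show "(\<exists>r. x = y * r) \<and> (\<exists>t. y = x * t)" using h unfolding right_ideal_def by auto
next
  assume "(\<exists>r. x = y * r) \<and> (\<exists>t. y = x * t)"
  then obtain r t where "x = y * r" "y = x * t" by blast
  then show "right_ideal x = right_ideal y" unfolding right_ideal_def
    by (auto simp: mult.assoc) (metis mult.assoc)+
qed

lemma li_eq: "left_ideal (x::'a::ring_1) = left_ideal y \<longleftrightarrow> (\<exists>r. x = r * y) \<and> (\<exists>t. y = t * x)"
proof
  assume h: "left_ideal x = left_ideal y"
  have "x \<in> left_ideal x" unfolding left_ideal_def by (auto intro: exI[of _ 1])
  moreover have "y \<in> left_ideal y" unfolding left_ideal_def by (auto intro: exI[of _ 1])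
  ultimately show "(\<exists>r. x = r * y) \<and> (\<exists>t. y = t * x)" using h unfolding left_ideal_def by auto
next
  assume "(\<exists>r. x = r * y) \<and> (\<exists>t. y = t * x)"
  then obtain r t where "x = r * y" "y = t * x" by blast
  then show "left_ideal x = left_ideal y" unfolding left_ideal_def
    by (auto simp: mult.assoc[symmetric]) (metis mult.assoc)+
qed

theorem theorem3p5:
  fixes s :: "'a::ring_1 \<Rightarrow> 'a" and a b :: 'a
  assumes "involution s"
    and "right_ideal a = right_ideal (a ^ 2)"
  shows "is_core_inverse s a b \<longleftrightarrow>
           (b * a * b = b \<and> s (a * b) = a * b \<and> b * a ^ 2 = a)"
proof -
  have ss: "\<And>x. s (s x) = x" and sm: "\<And>x y. s (x * y) = s y * s x"
    using assms(1) unfolding involution_def by auto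
  obtain r where r: "a = a * a * r" using assms(2) unfolding ri_eq power2_eq_square by blast
  show ?thesis
  proof
    assume "is_core_inverse s a b"
    then have aba: "a * b * a = a" and "right_ideal b = right_ideal a"
      and "left_ideal b = left_ideal (s a)" unfolding is_core_inverse_def by auto
    then obtain u v t where u: "b = u * s a" and v: "s a = v * b" and t: "a = b * t"
      unfolding ri_eq li_eq by blast
    have asa: "s a * s b * s a = s a" using aba sm by (metis mult.assoc)
    have ab: "a * b = a * b * s (a * b)"
      by (metis asa sm u mult.assoc)
    have herm: "s (a * b) = a * b" using ab sm ss by (metis mult.assoc)
    have bab: "b * a * b = b"
      by (metis asa herm sm u mult.assoc)
    have "b * a ^ 2 = a" by (metis bab t power2_eq_square mult.assoc)
    then show "b * a * b = b \<and> s (a * b) = a * b \<and> b * a ^ 2 = a" using bab herm by blast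
  next
    assume h: "b * a * b = b \<and> s (a * b) = a * b \<and> b * a ^ 2 = a"
    then have bab: "b * a * b = b" and herm: "s (a * b) = a * b" and ba2: "b * a * a = a"
      by (auto simp: power2_eq_square mult.assoc)
    have aba: "a * b * a = a" by (metis ba2 r mult.assoc)
    have ba: "b * a = a * r" by (metis ba2 r mult.assoc)
    have "right_ideal b = right_ideal a" unfolding ri_eq
      by (metis ba bab ba2 mult.assoc)
    moreover have "left_ideal b = left_ideal (s a)" unfolding li_eq
    proof
      show "\<exists>r. b = r * s a" by (metis bab herm sm mult.assoc)
      show "\<exists>t. s a = t * b" by (metis aba herm sm mult.assoc)
    qed
    ultimately show "is_core_inverse s a b" unfolding is_core_inverse_def using aba by blast
  qed
qed

end
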